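(* Let $Z=\{z_n\}_{n\in\mathbb{N}}$ be an almost periodic divisor in a strip $S$, let $S^0$ be a substrip with $\overline{S^0}\subset S$, let $\varepsilon>0$, and let $\tau_1,\tau_2\in E_{\varepsilon,S^0}$. Then there is a bijection $\sigma:\mathbb{N}\to\mathbb{N}$ such that for every $j$ with $z_j\in S^0$ and $\operatorname{dist}(z_j,\partial S^0)>\varepsilon$, $$|z_j+i(\tau_1-\tau_2)-z_{\sigma(j)}|<2\varepsilon,\qquad |z_j-i(\tau_1-\tau_2)-z_{\sigma^{-1}(j)}|<2\varepsilon.$$
   Context: A (vertical) strip is a set $\{z\in\mathbb{C}: a<\operatorname{Re} z<b\}$ with $-\infty\le a<b\le\infty$; a substrip of $S$ is a strip of this form contained in $S$. A divisor in $S$ is a sequence $\{z_j\}\subset S$ without limit points in $S$ (points may repeat finitely often, encoding multiplicity); $|Z|$ denotes its set of points. A set $E\subset\mathbb{R}$ is relatively dense if there is $L<\infty$ with $E\cap[\alpha,\alpha+L]\ne\emptyset$ for every $\alpha\in\mathbb{R}$. For $\varepsilon>0$ and a substrip $S^0$ with $\overline{S^0}\subset S$, $E_{\varepsilon,S^0}$ denotes the set of all $\tau\in\mathbb{R}$ for which there exists a bijection $\sigma=\sigma_\tau:\mathbb{N}\to\mathbb{N}$ such that for every $j$, ($z_j\in S^0$ or $z_{\sigma(j)}\in S^0$) implies $|z_j+i\tau-z_{\sigma(j)}|<\varepsilon$. The divisor $Z$ is almost periodic if $E_{\varepsilon,S^0}$ is relatively dense for every such $\varepsilon$ and $S^0$.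 *)

theory Defs
  imports "HOL-Analysis.Analysis"
begin

definition is_strip :: "complex set \<Rightarrow> bool" where
  "is_strip S \<longleftrightarrow> (\<exists>a b :: ereal. a < b \<and> S = {z. a < ereal (Re z) \<and> ereal (Re z) < b})"

definition is_substrip :: "complex set \<Rightarrow> complex set \<Rightarrow> bool" where
  "is_substrip S0 S \<longleftrightarrow> is_strip S0 \<and> S0 \<subseteq> S"

definition is_divisor :: "(nat \<Rightarrow> complex) \<Rightarrow> complex set \<Rightarrow> bool" where
  "is_divisor z S \<longleftrightarrow> range z \<subseteq> S \<and>
     (\<forall>w\<in>S. \<exists>r>0. finite {n. dist (z n) w < r})"

definition rel_dense :: "real set \<Rightarrow> bool" where
  "rel_dense E \<longleftrightarrow> (\<exists>L::real. \<forall>\<alpha>. E \<inter> {\<alpha>..\<alpha>+L} \<noteq> {})"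

definition E_set :: "(nat \<Rightarrow> complex) \<Rightarrow> real \<Rightarrow> complex set \<Rightarrow> real set" where
  "E_set z \<epsilon> S0 = {\<tau>. \<exists>\<sigma>::nat \<Rightarrow> nat. bij \<sigma> \<and>
      (\<forall>j. (z j \<in> S0 \<or> z (\<sigma> j) \<in> S0) \<longrightarrow>
            cmod (z j + \<i> * complex_of_real \<tau> - z (\<sigma> j)) < \<epsilon>)}"

definition almost_periodic_divisor :: "(nat \<Rightarrow> complex) \<Rightarrow> complex set \<Rightarrow> bool" where
  "almost_periodic_divisor z S \<longleftrightarrow> is_divisor z S \<and>
     (\<forall>\<epsilon>>0. \<forall>S0. is_substrip S0 S \<and> closure S0 \<subseteq> S \<longrightarrow> rel_dense (E_set z \<epsilon> S0))"

end

theory Submission imports Defs begin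
lemma ball_in_S0:
  fixes p :: complex
  assumes "p \<in> S0" "\<forall>w\<in>frontier S0. d \<le> dist p w"
  shows "ball p d \<subseteq> S0"
proof (rule ccontr)
  assume "\<not> ball p d \<subseteq> S0"
  hence "ball p d - S0 \<noteq> {}" by blast
  moreover have "ball p d \<inter> S0 \<noteq> {}" 
  proof -
    from \<open>ball p d - S0 \<noteq> {}\<close> obtain x where "x \<in> ball p d" by blast
    hence "0 < d" by (metis mem_ball zero_le_dist le_less_trans)
    thus ?thesis using assms(1) centre_in_ball[of p d] by blast
  qed
  ultimately have "ball p d \<inter> frontier S0 \<noteq> {}"
    using connected_Int_frontier[OF connected_ball, of p d S0] by blast
  then obtain w where "w \<in> ball p d" "w \<in> frontier S0" by blast
  hence "dist p w < d" "d \<le> dist p w" using assms(2) by auto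
  thus False by linarith
qed
lemma strip_near:
  assumes "is_strip S0" "p \<in> S0" "\<forall>w\<in>frontier S0. d \<le> dist p w" "\<bar>Re q - Re p\<bar> < d"
  shows "q \<in> S0"
proof -
  obtain a b where S0: "S0 = {z. a < ereal (Re z) \<and> ereal (Re z) < b}"
    using assms(1) unfolding is_strip_def by blast
  let ?w = "Complex (Re q) (Im p)"
  have "dist p ?w = \<bar>Re q - Re p\<bar>"
    by (simp add: dist_norm cmod_def)
  hence "dist p ?w < d" using assms(4) by simp
  hence "?w \<in> ball p d" by (simp only: mem_ball)
  hence "?w \<in> S0" using ball_in_S0[OF assms(2,3)] by blast
  hence "a < ereal (Re ?w) \<and> ereal (Re ?w) < b" unfolding S0 by (rule CollectD)
  hence "a < ereal (Re q) \<and> ereal (Re q) < b" by (simp only: complex.sel)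
  thus ?thesis unfolding S0 by (rule CollectI)
qed

lemma re_bound: "cmod (x::complex) < e \<Longrightarrow> \<bar>Re x\<bar> < e"
  by (rule le_less_trans[OF abs_Re_le_cmod])

lemma part:
  fixes z :: "nat \<Rightarrow> complex" and s1 s2 :: "nat \<Rightarrow> nat"
  assumes st: "is_strip S0" and b2: "bij s2"
    and p1: "\<forall>j. z j \<in> S0 \<or> z (s1 j) \<in> S0 \<longrightarrow> cmod (z j + \<i> * complex_of_real t1 - z (s1 j)) < e"
    and p2: "\<forall>j. z j \<in> S0 \<or> z (s2 j) \<in> S0 \<longrightarrow> cmod (z j + \<i> * complex_of_real t2 - z (s2 j)) < e"
    and zj: "z j \<in> S0" and d: "d > e" "\<forall>w\<in>frontier S0. d \<le> dist (z j) w"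
  shows "cmod (z j + \<i> * complex_of_real (t1 - t2) - z (s1 (inv s2 j))) < 2 * e"
proof -
  define k where "k = inv s2 j"
  have s2k: "s2 k = j" unfolding k_def using b2 by (simp add: bij_is_surj surj_f_inv_f)
  have kk: "z k \<in> S0 \<or> z (s2 k) \<in> S0" using zj s2k by simp
  have e1: "cmod (z k + \<i> * complex_of_real t2 - z j) < e"
    using p2[rule_format, OF kk] unfolding s2k .
  have r: "Re (z k + \<i> * complex_of_real t2 - z j) = Re (z k) - Re (z j)" by simp
  have "\<bar>Re (z k) - Re (z j)\<bar> < d"
    using less_trans[OF re_bound[OF e1] d(1)] unfolding r .
  hence zk: "z k \<in> S0" by (rule strip_near[OF st zj d(2)])
  have e2: "cmod (z k + \<i> * complex_of_real t1 - z (s1 k)) < e"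
    using p1 zk by blast
  have eqq: "z j + \<i> * complex_of_real (t1 - t2) - z (s1 (inv s2 j)) =
        (z k + \<i> * complex_of_real t1 - z (s1 k)) - (z k + \<i> * complex_of_real t2 - z j)"
    unfolding k_def[symmetric] by (simp add: algebra_simps)
  have "cmod (z j + \<i> * complex_of_real (t1 - t2) - z (s1 (inv s2 j))) \<le>
        cmod (z k + \<i> * complex_of_real t1 - z (s1 k)) + cmod (z k + \<i> * complex_of_real t2 - z j)"
    unfolding eqq by (rule norm_triangle_ineq4)
  hence "cmod (z j + \<i> * complex_of_real (t1 - t2) - z (s1 (inv s2 j))) < e + e"
    by (rule order_le_less_trans[OF _ add_strict_mono[OF e2 e1]])
  thus ?thesis by (simp only: mult_2)
qed


theorem lemma1:
  fixes z :: "nat \<Rightarrow> complex" and S S0 :: "complex set" and \<epsilon> \<tau>1 \<tau>2 :: real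
  assumes "is_strip S"
    and "almost_periodic_divisor z S"
    and "is_substrip S0 S" and "closure S0 \<subseteq> S"
    and "\<epsilon> > 0"
    and "\<tau>1 \<in> E_set z \<epsilon> S0" and "\<tau>2 \<in> E_set z \<epsilon> S0"
  shows "\<exists>\<sigma>::nat \<Rightarrow> nat. bij \<sigma> \<and>
    (\<forall>j. z j \<in> S0 \<and> (\<exists>d>\<epsilon>. \<forall>w\<in>frontier S0. d \<le> dist (z j) w) \<longrightarrow>
       cmod (z j + \<i> * complex_of_real (\<tau>1 - \<tau>2) - z (\<sigma> j)) < 2 * \<epsilon> \<and>
       cmod (z j - \<i> * complex_of_real (\<tau>1 - \<tau>2) - z (inv \<sigma> j)) < 2 * \<epsilon>)"
proof -
  have st: "is_strip S0" using assms(3) unfolding is_substrip_def by blast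
  have "\<exists>s. bij s \<and> (\<forall>j. z j \<in> S0 \<or> z (s j) \<in> S0 \<longrightarrow>
      cmod (z j + \<i> * complex_of_real \<tau>1 - z (s j)) < \<epsilon>)"
    using assms(6) unfolding E_set_def by blast
  then obtain s1 where s1a: "bij s1" and s1b: "\<forall>j. z j \<in> S0 \<or> z (s1 j) \<in> S0 \<longrightarrow>
      cmod (z j + \<i> * complex_of_real \<tau>1 - z (s1 j)) < \<epsilon>" by blast
  have "\<exists>s. bij s \<and> (\<forall>j. z j \<in> S0 \<or> z (s j) \<in> S0 \<longrightarrow>
      cmod (z j + \<i> * complex_of_real \<tau>2 - z (s j)) < \<epsilon>)"
    using assms(7) unfolding E_set_def by blast
  then obtain s2 where s2a: "bij s2" and s2b: "\<forall>j. z j \<in> S0 \<or> z (s2 j) \<in> S0 \<longrightarrow>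
      cmod (z j + \<i> * complex_of_real \<tau>2 - z (s2 j)) < \<epsilon>" by blast
  define \<sigma> where "\<sigma> = s1 \<circ> inv s2"
  have bs: "bij \<sigma>" unfolding \<sigma>_def using s1a s2a by (intro bij_comp bij_imp_bij_inv)
  have invs: "inv \<sigma> = s2 \<circ> inv s1"
    unfolding \<sigma>_def
    using o_inv_distrib[OF s1a bij_imp_bij_inv[OF s2a]] inv_inv_eq[OF s2a] by simp
  show ?thesis
  proof (rule exI[of _ \<sigma>], intro conjI allI impI)
    show "bij \<sigma>" by (rule bs)
  next
    fix j assume h: "z j \<in> S0 \<and> (\<exists>d>\<epsilon>. \<forall>w\<in>frontier S0. d \<le> dist (z j) w)"
    then obtain d where d: "d > \<epsilon>" "\<forall>w\<in>frontier S0. d \<le> dist (z j) w" by blast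
    have zj: "z j \<in> S0" using h by blast
    have "\<sigma> j = s1 (inv s2 j)" unfolding \<sigma>_def by simp
    thus "cmod (z j + \<i> * complex_of_real (\<tau>1 - \<tau>2) - z (\<sigma> j)) < 2 * \<epsilon>"
      using part[OF st s2a s1b s2b zj d] by simp
  next
    fix j assume h: "z j \<in> S0 \<and> (\<exists>d>\<epsilon>. \<forall>w\<in>frontier S0. d \<le> dist (z j) w)"
    then obtain d where d: "d > \<epsilon>" "\<forall>w\<in>frontier S0. d \<le> dist (z j) w" by blast
    have zj: "z j \<in> S0" using h by blast
    have e: "inv \<sigma> j = s2 (inv s1 j)" unfolding invs by simp
    have eq: "z j - \<i> * complex_of_real (\<tau>1 - \<tau>2) = z j + \<i> * complex_of_real (\<tau>2 - \<tau>1)"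
      by (simp add: algebra_simps)
    show "cmod (z j - \<i> * complex_of_real (\<tau>1 - \<tau>2) - z (inv \<sigma> j)) < 2 * \<epsilon>"
      unfolding eq e by (rule part[OF st s1a s2b s1b zj d])
  qed
qed

end
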